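(* If $G$ is a graph with no induced claw $K_{1,3}$, then $\operatorname{reg}(G)\le 2\operatorname{im}(G)$.
   Context: $\operatorname{reg}(G)=\max\{j\ge0:\widetilde H_{j-1}(\operatorname{Ind}(G[S]);\Bbbk)\neq0\text{ for some }S\subseteq V(G)\}$ over a field $\Bbbk$ ($\operatorname{Ind}$ = independence complex). $\operatorname{im}(G)$ is the induced matching number. *)

theory Defs
  imports Main
begin

definition simple_graph :: "'a set \<Rightarrow> ('a \<Rightarrow> 'a \<Rightarrow> bool) \<Rightarrow> bool" where
  "simple_graph V E \<longleftrightarrow> finite V \<and> (\<forall>u v. E u v \<longrightarrow> E v u)
     \<and> (\<forall>v. \<not> E v v) \<and> (\<forall>u v. E u v \<longrightarrow> u \<in> V \<and> v \<in> V)"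

definition claw_free :: "'a set \<Rightarrow> ('a \<Rightarrow> 'a \<Rightarrow> bool) \<Rightarrow> bool" where
  "claw_free V E \<longleftrightarrow> \<not> (\<exists>c a b d. c \<in> V \<and> a \<in> V \<and> b \<in> V \<and> d \<in> V
      \<and> E c a \<and> E c b \<and> E c d
      \<and> a \<noteq> b \<and> a \<noteq> d \<and> b \<noteq> d
      \<and> \<not> E a b \<and> \<not> E a d \<and> \<not> E b d)"

definition ind_complex :: "('a \<Rightarrow> 'a \<Rightarrow> bool) \<Rightarrow> 'a set \<Rightarrow> 'a set set" where
  "ind_complex E S = {F. F \<subseteq> S \<and> (\<forall>u\<in>F. \<forall>v\<in>F. \<not> E u v)}"

text \<open>Simplicial chains: a chain of "size" n (i.e. of dimension n-1) is a finitely
supported coefficient function on the faces of cardinality n.  Faces are oriented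
by the linear order on vertices.\<close>
definition is_chain :: "'a set set \<Rightarrow> nat \<Rightarrow> ('a set \<Rightarrow> 'k::field) \<Rightarrow> bool" where
  "is_chain \<Delta> n c \<longleftrightarrow> (\<forall>\<sigma>. c \<sigma> \<noteq> 0 \<longrightarrow> \<sigma> \<in> \<Delta> \<and> finite \<sigma> \<and> card \<sigma> = n)"

text \<open>Simplicial boundary map from chains on faces of cardinality n+1 to chains on faces of
cardinality n (with the augmentation to the empty face when n = 0):
the coefficient of \<tau> in the boundary of \<tau> \<union> {v} is (-1)^(position of v).\<close>
definition bdry :: "'a::linorder set set \<Rightarrow> nat \<Rightarrow> ('a set \<Rightarrow> 'k::field) \<Rightarrow> ('a set \<Rightarrow> 'k)" where
  "bdry \<Delta> n c \<tau> = (if \<tau> \<in> \<Delta> \<and> finite \<tau> \<and> card \<tau> = n then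
      (\<Sum>v\<in>{v\<in>\<Union>\<Delta>. v \<notin> \<tau> \<and> insert v \<tau> \<in> \<Delta>}.
          (-1) ^ card {u\<in>\<tau>. u < v} * c (insert v \<tau>))
    else 0)"

text \<open>Reduced homology H~_{j-1}(\<Delta>; k) is nonzero: there is a (j-1)-cycle that is not a
boundary.  (For j = 0 every (-1)-chain is a cycle.)\<close>
definition red_hom_nonzero :: "'k::field itself \<Rightarrow> 'a::linorder set set \<Rightarrow> nat \<Rightarrow> bool" where
  "red_hom_nonzero K \<Delta> j \<longleftrightarrow>
     (\<exists>z :: 'a set \<Rightarrow> 'k. is_chain \<Delta> j z
        \<and> (j > 0 \<longrightarrow> bdry \<Delta> (j - 1) z = (\<lambda>_. 0))
        \<and> \<not> (\<exists>d :: 'a set \<Rightarrow> 'k. is_chain \<Delta> (j + 1) d \<and> bdry \<Delta> j d = z))"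

text \<open>Castelnuovo--Mumford regularity via Hochster's formula, over the field 'k.\<close>
definition reg :: "'k::field itself \<Rightarrow> 'a::linorder set \<Rightarrow> ('a \<Rightarrow> 'a \<Rightarrow> bool) \<Rightarrow> nat" where
  "reg K V E = Max {j. \<exists>S. S \<subseteq> V \<and> red_hom_nonzero K (ind_complex E S) j}"

definition induced_matching :: "'a set \<Rightarrow> ('a \<Rightarrow> 'a \<Rightarrow> bool) \<Rightarrow> 'a set set \<Rightarrow> bool" where
  "induced_matching V E M \<longleftrightarrow>
     (\<forall>e\<in>M. \<exists>u v. u \<in> V \<and> v \<in> V \<and> E u v \<and> e = {u, v})
     \<and> (\<forall>e\<in>M. \<forall>f\<in>M. e \<noteq> f \<longrightarrow> e \<inter> f = {} \<and> (\<forall>x\<in>e. \<forall>y\<in>f. \<not> E x y))"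

definition im :: "'a set \<Rightarrow> ('a \<Rightarrow> 'a \<Rightarrow> bool) \<Rightarrow> nat" where
  "im V E = Max {card M | M. induced_matching V E M}"

end

theory Submission
  imports Defs
begin


definition sgv :: "'a::linorder \<Rightarrow> 'a set \<Rightarrow> 'k::field" where
  "sgv v \<tau> = (-1) ^ card {u\<in>\<tau>. u < v}"

lemma sgv_sq: "sgv v \<tau> * sgv v \<tau> = (1::'k::field)"
  unfolding sgv_def by (simp add: power_mult_distrib[symmetric])

lemma sgv_nz: "sgv v \<tau> \<noteq> (0::'k::field)"
  unfolding sgv_def by simp

lemma bdry_alt:
  "bdry \<Delta> n c \<tau> = (if \<tau> \<in> \<Delta> \<and> finite \<tau> \<and> card \<tau> = n then
      (\<Sum>x\<in>{x. x \<notin> \<tau> \<and> insert x \<tau> \<in> \<Delta>}. sgv x \<tau> * c (insert x \<tau>)) else 0)"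
proof -
  have "{v\<in>\<Union>\<Delta>. v \<notin> \<tau> \<and> insert v \<tau> \<in> \<Delta>} = {x. x \<notin> \<tau> \<and> insert x \<tau> \<in> \<Delta>}" by blast
  then show ?thesis unfolding bdry_def sgv_def by simp
qed

lemma ic_iff: "\<sigma> \<in> ind_complex E S \<longleftrightarrow> \<sigma> \<subseteq> S \<and> (\<forall>u\<in>\<sigma>. \<forall>w\<in>\<sigma>. \<not> E u w)"
  by (simp add: ind_complex_def)

lemma ic_down: "\<sigma> \<in> ind_complex E S \<Longrightarrow> \<tau> \<subseteq> \<sigma> \<Longrightarrow> \<tau> \<in> ind_complex E S"
  by (auto simp: ic_iff)

lemma ic_mono: "S \<subseteq> T \<Longrightarrow> ind_complex E S \<subseteq> ind_complex E T"
  unfolding ind_complex_def by blast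

lemma ic_fin: "finite S \<Longrightarrow> \<sigma> \<in> ind_complex E S \<Longrightarrow> finite \<sigma>"
  by (auto simp: ic_iff intro: finite_subset)

lemma ic_del: "v \<notin> \<sigma> \<Longrightarrow> \<sigma> \<in> ind_complex E (S - {v}) \<longleftrightarrow> \<sigma> \<in> ind_complex E S"
  by (auto simp: ic_iff)

lemma ic_empty: "ind_complex E {} = {{}}"
  by (auto simp: ic_iff)

lemma finB: "finite S \<Longrightarrow> finite {x. x \<notin> \<tau> \<and> insert x \<tau> \<in> ind_complex E S}"
  by (rule finite_subset[of _ S]) (auto simp: ic_iff)

lemma bdry_zero: "bdry \<Delta> n (\<lambda>_. 0::'k::field) = (\<lambda>_. 0)"
  by (rule ext) (simp add: bdry_def)

lemma bdry_add: "bdry \<Delta> n (\<lambda>\<sigma>. f \<sigma> + g \<sigma>) \<tau> = bdry \<Delta> n f \<tau> + (bdry \<Delta> n g \<tau> :: 'k::field)"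
  by (simp add: bdry_def sum.distrib distrib_left)

lemma no_faces:
  assumes "\<forall>\<sigma>\<in>\<Delta>. finite \<sigma> \<longrightarrow> card \<sigma> \<noteq> j"
  shows "\<not> red_hom_nonzero (K::'k::field itself) \<Delta> j"
proof
  assume "red_hom_nonzero K \<Delta> j"
  then obtain z :: "'a set \<Rightarrow> 'k" where z: "is_chain \<Delta> j z"
    and nb: "\<not> (\<exists>d :: 'a set \<Rightarrow> 'k. is_chain \<Delta> (j + 1) d \<and> bdry \<Delta> j d = z)"
    unfolding red_hom_nonzero_def by blast
  have "z = (\<lambda>_. 0)" using z assms unfolding is_chain_def by fastforce
  then have "is_chain \<Delta> (j + 1) (\<lambda>_. 0::'k) \<and> bdry \<Delta> j (\<lambda>_. 0::'k) = z"
    by (simp add: is_chain_def bdry_zero)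
  with nb show False by blast
qed

lemma no_hom0:
  assumes "v \<in> S" "\<not> E v v" "finite S"
  shows "\<not> red_hom_nonzero (K::'k::field itself) (ind_complex E S) 0"
proof
  assume "red_hom_nonzero K (ind_complex E S) 0"
  then obtain z :: "'a set \<Rightarrow> 'k" where z: "is_chain (ind_complex E S) 0 z"
    and nb: "\<not> (\<exists>d :: 'a set \<Rightarrow> 'k. is_chain (ind_complex E S) (0 + 1) d \<and> bdry (ind_complex E S) 0 d = z)"
    unfolding red_hom_nonzero_def by blast
  define d :: "'a set \<Rightarrow> 'k" where "d = (\<lambda>\<sigma>. if \<sigma> = {v} then z {} else 0)"
  have vf: "{v} \<in> ind_complex E S" using assms by (simp add: ic_iff)
  have "is_chain (ind_complex E S) (0+1) d" using vf by (simp add: d_def is_chain_def)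
  moreover have "bdry (ind_complex E S) 0 d = z"
  proof
    fix \<tau>
    show "bdry (ind_complex E S) 0 d \<tau> = z \<tau>"
    proof (cases "\<tau> \<in> ind_complex E S \<and> finite \<tau> \<and> card \<tau> = 0")
      case True
      then have t: "\<tau> = {}" by auto
      have "(\<Sum>x\<in>{x. x \<notin> \<tau> \<and> insert x \<tau> \<in> ind_complex E S}. sgv x \<tau> * d (insert x \<tau>))
          = (\<Sum>x\<in>{v}. sgv x \<tau> * d (insert x \<tau>))"
        using finB[OF assms(3), of \<tau> E] by (intro sum.mono_neutral_right) (auto simp: t d_def vf)
      then show ?thesis using True by (simp add: bdry_alt t d_def sgv_def)
    next
      case False
      then show ?thesis using z by (auto simp: bdry_alt is_chain_def)
    qed
  qed
  ultimately show False using nb by blast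
qed

lemma bdry_neg: "bdry \<Delta> n (\<lambda>\<sigma>. - f \<sigma>) \<tau> = - (bdry \<Delta> n f \<tau> :: 'k::field)"
  by (simp add: bdry_def sum_negf)

lemma sign_lemma:
  fixes x v :: "'a::linorder"
  assumes "finite \<rho>" "x \<noteq> v" "x \<notin> \<rho>" "v \<notin> \<rho>"
  shows "sgv x (insert v \<rho>) = - (sgv v \<rho> * sgv x \<rho> * sgv v (insert x \<rho>) :: 'k::field)"
proof -
  define a where "a = card {u\<in>\<rho>. u < x}"
  define b where "b = card {u\<in>\<rho>. u < v}"
  have fa: "finite {u\<in>\<rho>. u < x}" "finite {u\<in>\<rho>. u < v}" using assms(1) by auto
  have 1: "{u\<in>insert v \<rho>. u<x} = (if v<x then insert v {u\<in>\<rho>. u<x} else {u\<in>\<rho>. u<x})" by auto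
  have 2: "{u\<in>insert x \<rho>. u<v} = (if x<v then insert x {u\<in>\<rho>. u<v} else {u\<in>\<rho>. u<v})" by auto
  have bb: "(-1::'k)^b * (-1)^b = 1" by (simp add: power_mult_distrib[symmetric])
  have qpq: "(-1::'k)^b * (-1)^a * (-1)^b = (-1)^a"
    using bb by (metis mult.assoc mult.commute mult_1_right)
  have c1: "card {u\<in>insert v \<rho>. u<x} = (if v<x then Suc a else a)"
    unfolding 1 a_def using fa assms(4) by simp
  have c2: "card {u\<in>insert x \<rho>. u<v} = (if x<v then Suc b else b)"
    unfolding 2 b_def using fa assms(3) by simp
  show ?thesis
  proof (cases "v < x")
    case True
    then have "\<not> x < v" by auto
    then show ?thesis using True qpq unfolding sgv_def c1 c2 a_def[symmetric] b_def[symmetric]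
      by simp
  next
    case False
    then have "x < v" using assms(2) by auto
    then show ?thesis using False qpq unfolding sgv_def c1 c2 a_def[symmetric] b_def[symmetric]
      by simp
  qed
qed

locale vx =
  fixes E :: "'a::linorder \<Rightarrow> 'a \<Rightarrow> bool" and S :: "'a set" and v :: 'a
  assumes sym: "\<And>a b. E a b \<Longrightarrow> E b a" and irr: "\<And>a. \<not> E a a"
    and fin: "finite S" and vS: "v \<in> S"
begin

abbreviation "Dl \<equiv> ind_complex E S"
abbreviation "Dd \<equiv> ind_complex E (S - {v})"
abbreviation "Lk \<equiv> ind_complex E (S - insert v {x. E v x})"

lemma lk_iff: "v \<notin> \<rho> \<Longrightarrow> insert v \<rho> \<in> Dl \<longleftrightarrow> \<rho> \<in> Lk"
proof
  assume v: "v \<notin> \<rho>" and h: "insert v \<rho> \<in> Dl"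
  have a: "\<rho> \<subseteq> S" and b: "\<forall>u\<in>insert v \<rho>. \<forall>w\<in>insert v \<rho>. \<not> E u w" using h by (simp_all add: ic_iff)
  have "\<rho> \<subseteq> S - insert v {x. E v x}"
  proof
    fix x assume "x \<in> \<rho>"
    then show "x \<in> S - insert v {x. E v x}" using a b v by auto
  qed
  then show "\<rho> \<in> Lk" using b by (simp add: ic_iff)
next
  assume v: "v \<notin> \<rho>" and h: "\<rho> \<in> Lk"
  have a: "\<rho> \<subseteq> S - insert v {x. E v x}" and b: "\<forall>u\<in>\<rho>. \<forall>w\<in>\<rho>. \<not> E u w" using h by (simp_all add: ic_iff)
  have c: "\<forall>u\<in>insert v \<rho>. \<forall>w\<in>insert v \<rho>. \<not> E u w"
  proof (intro ballI)
    fix u w assume u: "u \<in> insert v \<rho>" and w: "w \<in> insert v \<rho>"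
    show "\<not> E u w"
    proof
      assume e: "E u w"
      have e': "E w u" using sym[OF e] .
      show False
      proof (cases "u = v")
        case True
        then show ?thesis using e w a irr by blast
      next
        case False
        then have "u \<in> \<rho>" using u by blast
        show ?thesis
        proof (cases "w = v")
          case True
          then show ?thesis using e' \<open>u \<in> \<rho>\<close> a by blast
        next
          case False
          then show ?thesis using \<open>u \<in> \<rho>\<close> w b e by blast
        qed
      qed
    qed
  qed
  have "insert v \<rho> \<subseteq> S" using a vS by blast
  then show "insert v \<rho> \<in> Dl" using c by (simp add: ic_iff)
qed

lemma Lk_sub: "Lk \<subseteq> Dd"
  by (rule ic_mono) blast

lemma Lk_nov: "\<rho> \<in> Lk \<Longrightarrow> v \<notin> \<rho>"
  unfolding ic_iff by blast

lemma Dd_nov: "\<rho> \<in> Dd \<Longrightarrow> v \<notin> \<rho>"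
  unfolding ic_iff by blast

lemma Dd_sub: "Dd \<subseteq> Dl"
  by (rule ic_mono) blast

lemma B_del: "v \<notin> \<tau> \<Longrightarrow> {x. x \<notin> \<tau> \<and> insert x \<tau> \<in> Dd} = {x. x \<notin> \<tau> \<and> insert x \<tau> \<in> Dl} - {v}"
proof (intro set_eqI iffI)
  fix x assume "v \<notin> \<tau>" "x \<in> {x. x \<notin> \<tau> \<and> insert x \<tau> \<in> Dd}"
  then show "x \<in> {x. x \<notin> \<tau> \<and> insert x \<tau> \<in> Dl} - {v}" using Dd_sub Dd_nov by blast
next
  fix x assume "v \<notin> \<tau>" "x \<in> {x. x \<notin> \<tau> \<and> insert x \<tau> \<in> Dl} - {v}"
  then show "x \<in> {x. x \<notin> \<tau> \<and> insert x \<tau> \<in> Dd}" using ic_del[of v "insert x \<tau>" E S] by blast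
qed

lemma B_v: "v \<notin> \<tau> \<Longrightarrow> v \<in> {x. x \<notin> \<tau> \<and> insert x \<tau> \<in> Dl} \<longleftrightarrow> \<tau> \<in> Lk"
  using lk_iff by blast

lemma B_lk: "v \<notin> \<rho> \<Longrightarrow> {x. x \<notin> insert v \<rho> \<and> insert x (insert v \<rho>) \<in> Dl} = {x. x \<notin> \<rho> \<and> insert x \<rho> \<in> Lk}"
proof (intro set_eqI iffI)
  fix x assume v: "v \<notin> \<rho>" and x: "x \<in> {x. x \<notin> insert v \<rho> \<and> insert x (insert v \<rho>) \<in> Dl}"
  then have 1: "insert v (insert x \<rho>) \<in> Dl" by (simp add: insert_commute)
  have 2: "v \<notin> insert x \<rho>" using x v by blast
  show "x \<in> {x. x \<notin> \<rho> \<and> insert x \<rho> \<in> Lk}" using x lk_iff[OF 2] 1 by blast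
next
  fix x assume v: "v \<notin> \<rho>" and x: "x \<in> {x. x \<notin> \<rho> \<and> insert x \<rho> \<in> Lk}"
  then have 2: "v \<notin> insert x \<rho>" using Lk_nov by blast
  then have "insert v (insert x \<rho>) \<in> Dl" using x lk_iff[OF 2] by blast
  then show "x \<in> {x. x \<notin> insert v \<rho> \<and> insert x (insert v \<rho>) \<in> Dl}"
    using 2 x by (auto simp: insert_commute)
qed

lemma bdry_link:
  assumes "v \<notin> \<rho>" "finite \<rho>" "\<rho> \<in> Lk" "card \<rho> = n"
    and hg: "\<And>x. x \<notin> \<rho> \<Longrightarrow> insert x \<rho> \<in> Lk \<Longrightarrow>
       g (insert x \<rho>) = sgv v (insert x \<rho>) * f (insert v (insert x \<rho>))"
  shows "bdry Dl (Suc n) f (insert v \<rho>) = - (sgv v \<rho> * bdry Lk n g \<rho> :: 'k::field)"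
proof -
  have c1: "insert v \<rho> \<in> Dl" using lk_iff assms by blast
  have c2: "card (insert v \<rho>) = Suc n" using assms by simp
  have "bdry Dl (Suc n) f (insert v \<rho>) =
     (\<Sum>x\<in>{x. x \<notin> \<rho> \<and> insert x \<rho> \<in> Lk}. sgv x (insert v \<rho>) * f (insert x (insert v \<rho>)))"
    unfolding B_lk[OF assms(1), symmetric]
    by (subst bdry_alt) (simp only: c1 c2 finite_insert assms(2) simp_thms if_True)
  also have "\<dots> = (\<Sum>x\<in>{x. x \<notin> \<rho> \<and> insert x \<rho> \<in> Lk}. - (sgv v \<rho> * (sgv x \<rho> * g (insert x \<rho>))))"
  proof (rule sum.cong[OF refl])
    fix x assume x: "x \<in> {x. x \<notin> \<rho> \<and> insert x \<rho> \<in> Lk}"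
    then have xv: "x \<noteq> v" using Lk_nov by blast
    have "sgv x (insert v \<rho>) = - (sgv v \<rho> * sgv x \<rho> * sgv v (insert x \<rho>) :: 'k)"
      using sign_lemma[OF assms(2) xv _ assms(1)] x by blast
    then show "sgv x (insert v \<rho>) * f (insert x (insert v \<rho>)) = - (sgv v \<rho> * (sgv x \<rho> * g (insert x \<rho>)))"
      using hg[of x] x by (simp add: insert_commute mult_ac)
  qed
  also have "\<dots> = - (sgv v \<rho> * bdry Lk n g \<rho>)"
    using assms by (simp add: bdry_alt sum_negf sum_distrib_left)
  finally show ?thesis .
qed

end


lemma chain_zero: "is_chain \<Delta> n f \<Longrightarrow> \<not> (\<sigma> \<in> \<Delta> \<and> finite \<sigma> \<and> card \<sigma> = n) \<Longrightarrow> f \<sigma> = 0"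
  unfolding is_chain_def by blast

lemma bdry_out: "\<not> (\<tau> \<in> \<Delta> \<and> finite \<tau> \<and> card \<tau> = n) \<Longrightarrow> bdry \<Delta> n f \<tau> = 0"
  by (subst bdry_alt) (rule if_not_P)

context vx begin

lemma vertex:
  assumes h: "red_hom_nonzero (K::'k::field itself) Dl j" and j1: "j \<ge> 1"
  shows "red_hom_nonzero K Dd j \<or> red_hom_nonzero K Lk (j - 1)"
proof -
  obtain z :: "'a set \<Rightarrow> 'k" where zc: "is_chain Dl j z"
    and zcyc0: "j > 0 \<longrightarrow> bdry Dl (j - 1) z = (\<lambda>_. 0)"
    and nb: "\<not> (\<exists>d :: 'a set \<Rightarrow> 'k. is_chain Dl (j + 1) d \<and> bdry Dl j d = z)"
    using h unfolding red_hom_nonzero_def by blast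
  have zcyc: "bdry Dl (j - 1) z = (\<lambda>_. 0)" using zcyc0 j1 by simp
  define w where "w = (\<lambda>\<rho>. if v \<notin> \<rho> then sgv v \<rho> * z (insert v \<rho>) else 0)"
  have wc: "is_chain Lk (j - 1) w"
    unfolding is_chain_def
  proof (intro allI impI)
    fix \<rho> assume wn: "w \<rho> \<noteq> 0"
    have v: "v \<notin> \<rho>"
    proof
      assume "v \<in> \<rho>" then have "w \<rho> = 0" unfolding w_def by simp
      with wn show False by contradiction
    qed
    have nz: "z (insert v \<rho>) \<noteq> 0"
    proof
      assume "z (insert v \<rho>) = 0" then have "w \<rho> = 0" unfolding w_def by simp
      with wn show False by contradiction
    qed
    have zz: "insert v \<rho> \<in> Dl \<and> finite (insert v \<rho>) \<and> card (insert v \<rho>) = j"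
      using zc nz unfolding is_chain_def by (elim allE[of _ "insert v \<rho>"]) (erule mp)
    have f: "finite \<rho>" using zz by simp
    have c: "card (insert v \<rho>) = j" using zz by blast
    have "card \<rho> = j - 1" using c f v by simp
    then show "\<rho> \<in> Lk \<and> finite \<rho> \<and> card \<rho> = j - 1" using lk_iff[OF v] zz f by blast
  qed
  have wcyc: "j - 1 > 0 \<longrightarrow> bdry Lk (j - 1 - 1) w = (\<lambda>_. 0)"
  proof (intro impI ext)
    fix \<rho> assume j2: "j - 1 > 0"
    show "bdry Lk (j - 1 - 1) w \<rho> = 0"
    proof (cases "\<rho> \<in> Lk \<and> finite \<rho> \<and> card \<rho> = j - 1 - 1")
      case True
      then have v: "v \<notin> \<rho>" using Lk_nov by blast
      have hg: "w (insert x \<rho>) = sgv v (insert x \<rho>) * z (insert v (insert x \<rho>))"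
        if "x \<notin> \<rho>" "insert x \<rho> \<in> Lk" for x
      proof -
        have "v \<notin> insert x \<rho>" using that(2) by (rule Lk_nov)
        then show ?thesis unfolding w_def by simp
      qed
      have "bdry Dl (Suc (j - 1 - 1)) z (insert v \<rho>) = - (sgv v \<rho> * bdry Lk (j - 1 - 1) w \<rho>)"
        using bdry_link[of \<rho> "j - 1 - 1" w z] True v hg by blast
      moreover have "Suc (j - 1 - 1) = j - 1" using j2 by simp
      ultimately have "- (sgv v \<rho> * bdry Lk (j - 1 - 1) w \<rho>) = 0" using zcyc by simp
      then have "sgv v \<rho> * bdry Lk (j - 1 - 1) w \<rho> = 0" by simp
      then show ?thesis by (metis mult_eq_0_iff sgv_nz)
    next
      case False
      show ?thesis by (subst bdry_alt) (simp only: False if_False)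
    qed
  qed
  show ?thesis
  proof (cases "\<exists>y :: 'a set \<Rightarrow> 'k. is_chain Lk (j - 1 + 1) y \<and> bdry Lk (j - 1) y = w")
    case False
    then have "red_hom_nonzero K Lk (j - 1)" unfolding red_hom_nonzero_def by (intro exI[of _ w]) (use wc wcyc in blast)
    then show ?thesis by blast
  next
    case True
    then obtain y :: "'a set \<Rightarrow> 'k" where yc: "is_chain Lk j y" and yb: "bdry Lk (j - 1) y = w"
      using j1 by auto
    define c where "c = (\<lambda>\<sigma>. if v \<in> \<sigma> \<and> \<sigma> - {v} \<in> Lk then - (sgv v (\<sigma> - {v}) * y (\<sigma> - {v})) else 0)"
    define z' where "z' = (\<lambda>\<sigma>. if v \<in> \<sigma> then 0 else z \<sigma> + y \<sigma>)"
    have z'c: "is_chain Dd j z'"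
      unfolding is_chain_def
    proof (intro allI impI)
      fix \<sigma> assume nz: "z' \<sigma> \<noteq> 0"
      have v: "v \<notin> \<sigma>"
      proof
        assume "v \<in> \<sigma>" then have "z' \<sigma> = 0" unfolding z'_def by simp
        with nz show False by contradiction
      qed
      then have "z \<sigma> + y \<sigma> \<noteq> 0" using nz unfolding z'_def by simp
      then have "z \<sigma> \<noteq> 0 \<or> y \<sigma> \<noteq> 0" by auto
      then show "\<sigma> \<in> Dd \<and> finite \<sigma> \<and> card \<sigma> = j"
      proof
        assume "z \<sigma> \<noteq> 0"
        then have "\<sigma> \<in> Dl \<and> finite \<sigma> \<and> card \<sigma> = j" using zc unfolding is_chain_def by blast
        then show ?thesis using ic_del[OF v, of E S] by blast
      next
        assume "y \<sigma> \<noteq> 0"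
        then have "\<sigma> \<in> Lk \<and> finite \<sigma> \<and> card \<sigma> = j" using yc unfolding is_chain_def by blast
        then show ?thesis using Lk_sub by blast
      qed
    qed
    have z'cyc: "bdry Dd (j - 1) z' = (\<lambda>_. 0)"
    proof
      fix \<tau>
      show "bdry Dd (j - 1) z' \<tau> = 0"
      proof (cases "\<tau> \<in> Dd \<and> finite \<tau> \<and> card \<tau> = j - 1")
        case True
        have vt: "v \<notin> \<tau>" using True Dd_nov by blast
        have tL: "\<tau> \<in> Dl" using True Dd_sub by blast
        define B where "B = {x. x \<notin> \<tau> \<and> insert x \<tau> \<in> Dl}"
        have fB: "finite B" unfolding B_def by (rule finB[OF fin])
        define BD where "BD = {x. x \<notin> \<tau> \<and> insert x \<tau> \<in> Dd}"
        have BD: "BD = B - {v}" unfolding BD_def B_def by (rule B_del[OF vt])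
        have "bdry Dd (j - 1) z' \<tau> = (\<Sum>x\<in>BD. sgv x \<tau> * z' (insert x \<tau>))"
          unfolding BD_def by (subst bdry_alt) (simp only: True if_True simp_thms)
        also have "\<dots> = (\<Sum>x\<in>BD. sgv x \<tau> * z (insert x \<tau>) + sgv x \<tau> * y (insert x \<tau>))"
        proof (rule sum.cong[OF refl])
          fix x assume "x \<in> BD"
          then have "v \<notin> insert x \<tau>" using BD vt by blast
          then show "sgv x \<tau> * z' (insert x \<tau>) = sgv x \<tau> * z (insert x \<tau>) + sgv x \<tau> * y (insert x \<tau>)"
            unfolding z'_def by (simp add: distrib_left)
        qed
        also have "\<dots> = (\<Sum>x\<in>BD. sgv x \<tau> * z (insert x \<tau>)) + (\<Sum>x\<in>BD. sgv x \<tau> * y (insert x \<tau>))"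
          by (rule sum.distrib)
        also have "\<dots> = 0"
        proof -
          have s0: "(\<Sum>x\<in>B. sgv x \<tau> * z (insert x \<tau>)) = 0"
          proof -
            have "bdry Dl (j - 1) z \<tau> = (\<Sum>x\<in>B. sgv x \<tau> * z (insert x \<tau>))"
              unfolding B_def using True tL by (subst bdry_alt) (simp only: True tL if_True simp_thms)
            then show ?thesis using zcyc by simp
          qed
          have s1: "(\<Sum>x\<in>BD. sgv x \<tau> * z (insert x \<tau>)) =
              (if v \<in> B then (\<Sum>x\<in>B. sgv x \<tau> * z (insert x \<tau>)) - sgv v \<tau> * z (insert v \<tau>)
               else (\<Sum>x\<in>B. sgv x \<tau> * z (insert x \<tau>)))"
            unfolding BD by (rule sum_diff1[OF fB])
          show ?thesis
          proof (cases "\<tau> \<in> Lk")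
            case True
            define BL where "BL = {x. x \<notin> \<tau> \<and> insert x \<tau> \<in> Lk}"
            have "(\<Sum>x\<in>BD. sgv x \<tau> * y (insert x \<tau>)) = (\<Sum>x\<in>BL. sgv x \<tau> * y (insert x \<tau>))"
            proof (rule sum.mono_neutral_right)
              show "finite BD" unfolding BD using fB by simp
              show "BL \<subseteq> BD" unfolding BL_def BD_def using Lk_sub by blast
              show "\<forall>x\<in>BD - BL. sgv x \<tau> * y (insert x \<tau>) = 0"
              proof
                fix x assume "x \<in> BD - BL"
                then have "insert x \<tau> \<notin> Lk" unfolding BL_def BD_def by blast
                then have "y (insert x \<tau>) = 0" using yc by (intro chain_zero) auto
                then show "sgv x \<tau> * y (insert x \<tau>) = 0" by simp
              qed
            qed
            also have "\<dots> = bdry Lk (j - 1) y \<tau>"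
              unfolding BL_def using True \<open>\<tau> \<in> Dd \<and> finite \<tau> \<and> card \<tau> = j - 1\<close>
              by (subst bdry_alt) simp
            also have "\<dots> = sgv v \<tau> * z (insert v \<tau>)" using yb vt unfolding w_def by simp
            finally have s2: "(\<Sum>x\<in>BD. sgv x \<tau> * y (insert x \<tau>)) = sgv v \<tau> * z (insert v \<tau>)" .
            have "v \<in> B" unfolding B_def using B_v[OF vt] True by blast
            then show ?thesis using s0 s1 s2 by simp
          next
            case False
            have "(\<Sum>x\<in>BD. sgv x \<tau> * y (insert x \<tau>)) = 0"
            proof (rule sum.neutral, rule ballI)
              fix x assume "x \<in> BD"
              have "insert x \<tau> \<notin> Lk" using False ic_down[of "insert x \<tau>" E] by blast
              then have "y (insert x \<tau>) = 0" using yc by (intro chain_zero) auto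
              then show "sgv x \<tau> * y (insert x \<tau>) = 0" by simp
            qed
            moreover have "v \<notin> B" unfolding B_def using B_v[OF vt] False by blast
            ultimately show ?thesis using s0 s1 by simp
          qed
        qed
        finally show ?thesis .
      next
        case False
        then show ?thesis by (rule bdry_out)
      qed
    qed
    have cc: "is_chain Dl (j + 1) c"
      unfolding is_chain_def
    proof (intro allI impI)
      fix \<sigma> assume nz: "c \<sigma> \<noteq> 0"
      have h1: "v \<in> \<sigma> \<and> \<sigma> - {v} \<in> Lk"
      proof (rule ccontr)
        assume "\<not> (v \<in> \<sigma> \<and> \<sigma> - {v} \<in> Lk)"
        then have "c \<sigma> = 0" unfolding c_def by (rule if_not_P)
        with nz show False by contradiction
      qed
      then have "y (\<sigma> - {v}) \<noteq> 0" using nz unfolding c_def by auto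
      then have h2: "finite (\<sigma> - {v}) \<and> card (\<sigma> - {v}) = j" using yc unfolding is_chain_def by blast
      have e: "\<sigma> = insert v (\<sigma> - {v})" using h1 by blast
      have "insert v (\<sigma> - {v}) \<in> Dl" using lk_iff[of "\<sigma> - {v}"] h1 by blast
      moreover have "finite (insert v (\<sigma> - {v}))" using h2 by simp
      moreover have "card (insert v (\<sigma> - {v})) = Suc (card (\<sigma> - {v}))"
        by (rule card_insert_disjoint) (use h2 in auto)
      then have "card (insert v (\<sigma> - {v})) = j + 1" using h2 by simp
      ultimately show "\<sigma> \<in> Dl \<and> finite \<sigma> \<and> card \<sigma> = j + 1" using e by simp
    qed
    have K1: "bdry Dl j c \<tau> = z \<tau> - z' \<tau>" for \<tau>
    proof (cases "v \<in> \<tau>")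
      case True
      define \<rho> where "\<rho> = \<tau> - {v}"
      have v\<rho>: "v \<notin> \<rho>" unfolding \<rho>_def by blast
      have te: "\<tau> = insert v \<rho>" unfolding \<rho>_def using True by blast
      have z'0: "z' \<tau> = 0" unfolding z'_def using True by simp
      show ?thesis
      proof (cases "\<rho> \<in> Lk \<and> finite \<rho> \<and> card \<rho> = j - 1")
        case True
        have hg: "- y (insert x \<rho>) = sgv v (insert x \<rho>) * c (insert v (insert x \<rho>))"
          if "x \<notin> \<rho>" "insert x \<rho> \<in> Lk" for x
        proof -
          have vx: "v \<notin> insert x \<rho>" using that(2) by (rule Lk_nov)
          then have "insert v (insert x \<rho>) - {v} = insert x \<rho>" by blast
          then have "c (insert v (insert x \<rho>)) = - (sgv v (insert x \<rho>) * y (insert x \<rho>))"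
            unfolding c_def using that(2) by simp
          then show ?thesis using sgv_sq[of v "insert x \<rho>", where 'k='k]
            by (simp add: mult.assoc[symmetric])
        qed
        have "bdry Dl (Suc (j - 1)) c (insert v \<rho>) = - (sgv v \<rho> * bdry Lk (j - 1) (\<lambda>\<rho>'. - y \<rho>') \<rho>)"
          using bdry_link[of \<rho> "j - 1" "\<lambda>\<rho>'. - y \<rho>'" c] True v\<rho> hg by blast
        also have "\<dots> = sgv v \<rho> * w \<rho>" using yb by (simp add: bdry_neg)
        also have "\<dots> = z \<tau>" unfolding w_def te using v\<rho> sgv_sq[of v \<rho>, where 'k='k]
          by (simp add: mult.assoc[symmetric])
        finally show ?thesis using j1 te z'0 by simp
      next
        case False
        have n1: "\<not> (\<tau> \<in> Dl \<and> finite \<tau> \<and> card \<tau> = j)"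
        proof
          assume a: "\<tau> \<in> Dl \<and> finite \<tau> \<and> card \<tau> = j"
          then have "\<rho> \<in> Lk" using lk_iff[OF v\<rho>] te by blast
          moreover have "finite \<rho>" using a te by simp
          moreover have "card \<rho> = j - 1"
          proof -
            have c: "card \<tau> = j" using a by blast
            have "card \<tau> = Suc (card \<rho>)" using te v\<rho> \<open>finite \<rho>\<close> by simp
            then show ?thesis using c by linarith
          qed
          ultimately show False using False by blast
        qed
        have "bdry Dl j c \<tau> = 0" using n1 by (rule bdry_out)
        moreover have "z \<tau> = 0" using zc n1 by (rule chain_zero)
        ultimately show ?thesis using z'0 by simp
      qed
    next
      case False
      have z'e: "z' \<tau> = z \<tau> + y \<tau>" unfolding z'_def using False by simp
      have "bdry Dl j c \<tau> = - y \<tau>"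
      proof (cases "\<tau> \<in> Dl \<and> finite \<tau> \<and> card \<tau> = j")
        case True
        define B where "B = {x. x \<notin> \<tau> \<and> insert x \<tau> \<in> Dl}"
        have fB: "finite B" unfolding B_def by (rule finB[OF fin])
        have "bdry Dl j c \<tau> = (\<Sum>x\<in>B. sgv x \<tau> * c (insert x \<tau>))"
          unfolding B_def by (subst bdry_alt) (simp only: True if_True simp_thms)
        also have "\<dots> = (\<Sum>x\<in>B \<inter> {v}. sgv x \<tau> * c (insert x \<tau>))"
        proof (rule sum.mono_neutral_right[OF fB])
          show "B \<inter> {v} \<subseteq> B" by blast
          show "\<forall>x\<in>B - B \<inter> {v}. sgv x \<tau> * c (insert x \<tau>) = 0"
          proof
            fix x assume "x \<in> B - B \<inter> {v}"
            then have "v \<notin> insert x \<tau>" using False by blast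
            then show "sgv x \<tau> * c (insert x \<tau>) = 0" unfolding c_def by simp
          qed
        qed
        also have "\<dots> = - y \<tau>"
        proof (cases "\<tau> \<in> Lk")
          case True
          then have "B \<inter> {v} = {v}" unfolding B_def using B_v[OF False] by blast
          moreover have "insert v \<tau> - {v} = \<tau>" using False by blast
          ultimately show ?thesis unfolding c_def using True sgv_sq[of v \<tau>, where 'k='k]
            by (simp add: mult.assoc[symmetric])
        next
          case nL: False
          then have "B \<inter> {v} = {}" unfolding B_def using B_v[OF \<open>v \<notin> \<tau>\<close>] by blast
          moreover have "y \<tau> = 0" using yc nL by (intro chain_zero) auto
          ultimately show ?thesis by simp
        qed
        finally show ?thesis .
      next
        case nD: False
        have "bdry Dl j c \<tau> = 0" using nD by (rule bdry_out)
        moreover have "y \<tau> = 0" using yc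
        proof (rule chain_zero)
          show "\<not> (\<tau> \<in> Lk \<and> finite \<tau> \<and> card \<tau> = j)" using nD Lk_sub Dd_sub by blast
        qed
        ultimately show ?thesis by simp
      qed
      then show ?thesis using z'e by simp
    qed
    have "\<not> (\<exists>d :: 'a set \<Rightarrow> 'k. is_chain Dd (j + 1) d \<and> bdry Dd j d = z')"
    proof
      assume "\<exists>d :: 'a set \<Rightarrow> 'k. is_chain Dd (j + 1) d \<and> bdry Dd j d = z'"
      then obtain d :: "'a set \<Rightarrow> 'k" where dc: "is_chain Dd (j + 1) d" and db: "bdry Dd j d = z'"
        by blast
      have dz: "d \<sigma> = 0" if "v \<in> \<sigma>" for \<sigma>
        using dc that Dd_nov unfolding is_chain_def by blast
      have K2: "bdry Dl j d \<tau> = z' \<tau>" for \<tau>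
      proof (cases "v \<in> \<tau>")
        case True
        have "\<And>x. d (insert x \<tau>) = 0" using True dz by blast
        then have "bdry Dl j d \<tau> = 0" by (simp add: bdry_alt)
        moreover have "z' \<tau> = 0" unfolding z'_def using True by simp
        ultimately show ?thesis by simp
      next
        case False
        show ?thesis
        proof (cases "\<tau> \<in> Dl \<and> finite \<tau> \<and> card \<tau> = j")
          case True
          have tD: "\<tau> \<in> Dd" using True ic_del[OF False, of E S] by blast
          define B where "B = {x. x \<notin> \<tau> \<and> insert x \<tau> \<in> Dl}"
          have fB: "finite B" unfolding B_def by (rule finB[OF fin])
          have "bdry Dl j d \<tau> = (\<Sum>x\<in>B. sgv x \<tau> * d (insert x \<tau>))"
            unfolding B_def by (subst bdry_alt) (simp only: True if_True simp_thms)
          also have "\<dots> = (\<Sum>x\<in>B - {v}. sgv x \<tau> * d (insert x \<tau>))"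
            by (rule sum.mono_neutral_right[OF fB]) (auto simp: dz)
          also have "\<dots> = bdry Dd j d \<tau>"
            using True tD unfolding B_def B_del[OF False, symmetric] 
            by (subst bdry_alt) (simp only: True tD if_True simp_thms)
          also have "\<dots> = z' \<tau>" using db by simp
          finally show ?thesis .
        next
          case nD: False
          have "bdry Dl j d \<tau> = 0" using nD by (rule bdry_out)
          moreover have "z' \<tau> = 0" using z'c
          proof (rule chain_zero)
            show "\<not> (\<tau> \<in> Dd \<and> finite \<tau> \<and> card \<tau> = j)" using nD Dd_sub by blast
          qed
          ultimately show ?thesis by simp
        qed
      qed
      have "is_chain Dl (j + 1) (\<lambda>\<sigma>. d \<sigma> + c \<sigma>)"
        unfolding is_chain_def
      proof (intro allI impI)
        fix \<sigma> assume "d \<sigma> + c \<sigma> \<noteq> 0"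
        then have "d \<sigma> \<noteq> 0 \<or> c \<sigma> \<noteq> 0" by auto
        then show "\<sigma> \<in> Dl \<and> finite \<sigma> \<and> card \<sigma> = j + 1"
          using dc cc Dd_sub unfolding is_chain_def by blast
      qed
      moreover have "bdry Dl j (\<lambda>\<sigma>. d \<sigma> + c \<sigma>) = z"
        by (rule ext) (simp add: bdry_add K1 K2)
      ultimately show False using nb by blast
    qed
    then have "red_hom_nonzero K Dd j" unfolding red_hom_nonzero_def by (intro exI[of _ z']) (use z'c z'cyc j1 in simp)
    then show ?thesis by blast
  qed
qed

end


lemma hom_empty0: "red_hom_nonzero (K::'k::field itself) (ind_complex E {}) 0"
proof -
  define z :: "'a::linorder set \<Rightarrow> 'k" where "z = (\<lambda>\<sigma>. if \<sigma> = {} then 1 else 0)"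
  have zc: "is_chain (ind_complex E {}) 0 z" unfolding z_def is_chain_def ic_empty by simp
  have nb: "\<not> (\<exists>d :: 'a set \<Rightarrow> 'k. is_chain (ind_complex E {}) (0 + 1) d \<and> bdry (ind_complex E {}) 0 d = z)"
  proof
    assume "\<exists>d :: 'a set \<Rightarrow> 'k. is_chain (ind_complex E {}) (0 + 1) d \<and> bdry (ind_complex E {}) 0 d = z"
    then obtain d :: "'a set \<Rightarrow> 'k" where "bdry (ind_complex E {}) 0 d = z" by blast
    then have "bdry (ind_complex E {}) 0 d {} = z {}" by simp
    moreover have "{x. x \<notin> {} \<and> insert x {} \<in> ind_complex E {}} = ({} :: 'a set)" unfolding ic_empty by auto
    ultimately show False unfolding z_def bdry_alt ic_empty by simp
  qed
  show ?thesis unfolding red_hom_nonzero_def using zc nb by blast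
qed

lemma single_hom1:
  assumes "\<not> E v v"
  shows "\<not> red_hom_nonzero (K::'k::field itself) (ind_complex E {v::'a::linorder}) 1"
proof
  assume "red_hom_nonzero K (ind_complex E {v}) 1"
  then obtain z :: "'a set \<Rightarrow> 'k" where H: "is_chain (ind_complex E {v}) 1 z \<and>
        (0 < (1::nat) \<longrightarrow> bdry (ind_complex E {v}) (1 - 1) z = (\<lambda>_. 0)) \<and>
        \<not> (\<exists>d :: 'a set \<Rightarrow> 'k. is_chain (ind_complex E {v}) (1 + 1) d \<and> bdry (ind_complex E {v}) 1 d = z)"
    unfolding red_hom_nonzero_def by (elim exE) (rule that)
  have zc: "is_chain (ind_complex E {v}) 1 z" using H by blast
  have zcyc: "bdry (ind_complex E {v}) 0 z = (\<lambda>_. 0)" using H by simp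
  have nb: "\<not> (\<exists>d :: 'a set \<Rightarrow> 'k. is_chain (ind_complex E {v}) (1 + 1) d \<and> bdry (ind_complex E {v}) 1 d = z)"
    using H by blast
  have B: "{x. x \<notin> {} \<and> insert x {} \<in> ind_complex E {v}} = {v}" using assms by (auto simp: ic_iff)
  have "bdry (ind_complex E {v}) 0 z {} = z {v}"
    unfolding bdry_alt B by (simp add: ic_iff sgv_def)
  moreover have "bdry (ind_complex E {v}) 0 z {} = 0" using zcyc by simp
  ultimately have zv: "z {v} = 0" by simp
  have "z = (\<lambda>_. 0)"
  proof
    fix \<sigma>
    show "z \<sigma> = 0"
    proof (cases "\<sigma> = {v}")
      case True then show ?thesis using zv by simp
    next
      case False
      have "\<not> (\<sigma> \<in> ind_complex E {v} \<and> finite \<sigma> \<and> card \<sigma> = 1)"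
      proof
        assume "\<sigma> \<in> ind_complex E {v} \<and> finite \<sigma> \<and> card \<sigma> = 1"
        then have "\<sigma> \<subseteq> {v}" "card \<sigma> = 1" by (auto simp: ic_iff)
        then obtain x where "\<sigma> = {x}" using card_1_singletonE[of \<sigma>] by blast
        then show False using False \<open>\<sigma> \<subseteq> {v}\<close> by simp
      qed
      then show ?thesis using zc by (rule chain_zero[rotated])
    qed
  qed
  then have "is_chain (ind_complex E {v}) (1 + 1) (\<lambda>_. 0::'k) \<and> bdry (ind_complex E {v}) 1 (\<lambda>_. 0::'k) = z"
    by (simp add: is_chain_def bdry_zero)
  with nb show False by blast
qed

lemma edgeless:
  assumes sym: "\<And>a b. E a b \<Longrightarrow> E b a" and irr: "\<And>a. \<not> E a a"
    and "finite S" "S \<noteq> {}" "\<forall>a\<in>S. \<forall>b\<in>S. \<not> E a b"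
  shows "\<not> red_hom_nonzero (K::'k::field itself) (ind_complex E (S::'a::linorder set)) j"
  using assms(3-)
proof (induction "card S" arbitrary: S j rule: less_induct)
  case less
  obtain v where vS: "v \<in> S" using less.prems by blast
  interpret vx E S v using sym irr less.prems vS by unfold_locales auto
  show ?case
  proof (cases "j = 0")
    case True
    then show ?thesis using no_hom0[of v S E, OF vS irr[of v] fin] by simp
  next
    case False
    then have j1: "j \<ge> 1" by simp
    show ?thesis
    proof (cases "S = {v}")
      case True
      show ?thesis
      proof (cases "j = 1")
        case True
        then show ?thesis using single_hom1[of E v] irr \<open>S = {v}\<close> by simp
      next
        case False
        show ?thesis
        proof (rule no_faces, intro ballI impI)
          fix \<sigma> assume "\<sigma> \<in> ind_complex E S" "finite \<sigma>"
          then have "\<sigma> \<subseteq> {v}" using \<open>S = {v}\<close> by (simp add: ic_iff)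
          then have "card \<sigma> \<le> 1" using card_mono[of "{v}" \<sigma>] by simp
          then show "card \<sigma> \<noteq> j" using False j1 by simp
        qed
      qed
    next
      case False
      then have ne: "S - {v} \<noteq> {}" using vS by blast
      have lk: "S - insert v {x. E v x} = S - {v}" using less.prems(3) vS by blast
      have cl: "card (S - {v}) < card S" by (rule card_Diff1_less[OF fin vS])
      have e: "\<forall>a\<in>S - {v}. \<forall>b\<in>S - {v}. \<not> E a b" using less.prems(3) by blast
      have f: "finite (S - {v})" using fin by simp
      show ?thesis
      proof
        assume "red_hom_nonzero K (ind_complex E S) j"
        from vertex[OF this j1] show False
          unfolding lk using less.hyps[OF cl f ne e] by blast
      qed
    qed
  qed
qed



lemma imE1: "induced_matching V E M \<Longrightarrow> e \<in> M \<Longrightarrow> \<exists>a b. a \<in> V \<and> b \<in> V \<and> E a b \<and> e = {a, b}"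
  unfolding induced_matching_def by (elim conjE) (erule bspec)

lemma imE2: "induced_matching V E M \<Longrightarrow> e \<in> M \<Longrightarrow> f \<in> M \<Longrightarrow> e \<noteq> f \<Longrightarrow> e \<inter> f = {}"
  unfolding induced_matching_def by (elim conjE) (drule bspec, assumption, drule bspec, assumption, drule mp, assumption, erule conjunct1)

lemma imE3: "induced_matching V E M \<Longrightarrow> e \<in> M \<Longrightarrow> f \<in> M \<Longrightarrow> e \<noteq> f \<Longrightarrow> x \<in> e \<Longrightarrow> y \<in> f \<Longrightarrow> \<not> E x y"
  unfolding induced_matching_def by (elim conjE) (drule bspec, assumption, drule bspec, assumption, drule mp, assumption, drule conjunct2, drule bspec, assumption, drule bspec, assumption, assumption)

lemma im_set_fin:
  assumes "finite S"
  shows "finite {card M | M. induced_matching S E M}"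
proof -
  have sub: "M \<subseteq> Pow S" if im: "induced_matching S E M" for M
  proof
    fix e assume "e \<in> M"
    then obtain a b where "a \<in> S" "b \<in> S" "e = {a, b}"
      using imE1[OF im] by blast
    then show "e \<in> Pow S" by simp
  qed
  have le: "card M \<le> card (Pow S)" if "induced_matching S E M" for M
    using sub[OF that] assms by (intro card_mono) simp_all
  have "{card M | M. induced_matching S E M} \<subseteq> {..card (Pow S)}"
  proof
    fix n assume "n \<in> {card M | M. induced_matching S E M}"
    then obtain M where "induced_matching S E M" "n = card M" by blast
    then show "n \<in> {..card (Pow S)}" using le by simp
  qed
  then show ?thesis by (rule finite_subset) simp
qed

lemma im_ne: "{card M | M. induced_matching S E M} \<noteq> {}"
proof -
  have "induced_matching S E {}" unfolding induced_matching_def by simp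
  then show ?thesis by blast
qed

lemma im_ge: "finite S \<Longrightarrow> induced_matching S E M \<Longrightarrow> card M \<le> im S E"
  unfolding im_def by (rule Max_ge[OF im_set_fin]) auto

lemma im_ex: "finite S \<Longrightarrow> \<exists>M. induced_matching S E M \<and> card M = im S E"
proof -
  assume f: "finite S"
  have "im S E \<in> {card M | M. induced_matching S E M}"
    unfolding im_def by (rule Max_in[OF im_set_fin[OF f] im_ne])
  then obtain M where M: "im S E = card M \<and> induced_matching S E M" unfolding mem_Collect_eq ..
  then show ?thesis by auto
qed

lemma im_mono:
  assumes "finite T" "S \<subseteq> T"
  shows "im S E \<le> im T E"
proof -
  have fS: "finite S" using assms finite_subset by blast
  obtain M where M: "induced_matching S E M" "card M = im S E" using im_ex[OF fS] by blast
  have "induced_matching T E M" unfolding induced_matching_def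
  proof (intro conjI ballI impI)
    fix e assume "e \<in> M"
    then obtain a b where "a \<in> S" "b \<in> S" "E a b" "e = {a, b}" using imE1[OF M(1)] by blast
    then show "\<exists>a b. a \<in> T \<and> b \<in> T \<and> E a b \<and> e = {a, b}" using assms(2) by blast
  next
    fix e f assume "e \<in> M" "f \<in> M" "e \<noteq> f"
    then show "e \<inter> f = {}" by (rule imE2[OF M(1)])
  next
    fix e f x y assume "e \<in> M" "f \<in> M" "e \<noteq> f" "x \<in> e" "y \<in> f"
    then show "\<not> E x y" by (rule imE3[OF M(1)])
  qed
  then show ?thesis using im_ge[OF assms(1), of E M] M(2) by simp
qed

lemma im_ext:
  assumes sym: "\<And>a b. E a b \<Longrightarrow> E b a" and fin: "finite S"
    and LS: "L \<subseteq> S" and uS: "u \<in> S" and vS: "v \<in> S" and uv: "E u v"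
    and uL: "u \<notin> L" and vL: "v \<notin> L" and nu: "\<forall>y\<in>L. \<not> E u y \<and> \<not> E v y"
  shows "im L E + 1 \<le> im S E"
proof -
  have fL: "finite L" using LS fin finite_subset by blast
  obtain M where M: "induced_matching L E M" "card M = im L E" using im_ex[OF fL] by blast
  have sub: "\<forall>e\<in>M. e \<subseteq> L"
  proof
    fix e assume "e \<in> M"
    then obtain a b where "a \<in> L" "b \<in> L" "e = {a, b}"
      using imE1[OF M(1)] by blast
    then show "e \<subseteq> L" by simp
  qed
  have fM: "finite M"
  proof (rule finite_subset[of M "Pow L"])
    show "M \<subseteq> Pow L" using sub by blast
  qed (use fL in simp)
  have nin: "{u, v} \<notin> M" using sub uL by blast
  have im2: "induced_matching S E (insert {u, v} M)"
    unfolding induced_matching_def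
  proof (intro conjI ballI impI)
    fix e assume "e \<in> insert {u, v} M"
    then show "\<exists>a b. a \<in> S \<and> b \<in> S \<and> E a b \<and> e = {a, b}"
    proof
      assume "e = {u, v}" then show ?thesis using uS vS uv by blast
    next
      assume "e \<in> M"
      then obtain a b where "a \<in> L" "b \<in> L" "E a b" "e = {a, b}" using imE1[OF M(1)] by blast
      then show ?thesis using LS by blast
    qed
  next
    fix e f assume e: "e \<in> insert {u, v} M" and f: "f \<in> insert {u, v} M" and ne: "e \<noteq> f"
    show "e \<inter> f = {}"
    proof (cases "e = {u, v}")
      case True
      then have "f \<in> M" using f ne by blast
      then have "f \<subseteq> L" using sub by blast
      then show ?thesis using True uL vL by blast
    next
      case False
      then have eM: "e \<in> M" using e by blast
      then have eL: "e \<subseteq> L" using sub by blast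
      show ?thesis
      proof (cases "f = {u, v}")
        case True
        then show ?thesis using eL uL vL by blast
      next
        case False
        then have "f \<in> M" using f by blast
        then show ?thesis using eM ne by (intro imE2[OF M(1)])
      qed
    qed
  next
    fix e f x y assume e: "e \<in> insert {u, v} M" and f: "f \<in> insert {u, v} M" and ne: "e \<noteq> f"
      and x: "x \<in> e" and y: "y \<in> f"
    show "\<not> E x y"
    proof (cases "e = {u, v}")
      case True
      then have fM': "f \<in> M" using f ne by blast
      then have "y \<in> L" using sub y by blast
      then show ?thesis using nu x True by blast
    next
      case False
      then have eM: "e \<in> M" using e by blast
      then have xL: "x \<in> L" using sub x by blast
      show ?thesis
      proof (cases "f = {u, v}")
        case True
        show ?thesis
        proof
          assume "E x y"
          then have "E y x" by (rule sym)
          then show False using nu xL y True by blast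
        qed
      next
        case False
        then have "f \<in> M" using f by blast
        then show ?thesis using eM ne x y by (intro imE3[OF M(1)])
      qed
    qed
  qed
  have "card (insert {u, v} M) = im L E + 1" using fM nin M(2) by simp
  then show ?thesis using im_ge[OF fin im2] by simp
qed



lemma main_ind:
  fixes V :: "'a::linorder set" and E :: "'a \<Rightarrow> 'a \<Rightarrow> bool"
  assumes sym: "\<And>a b. E a b \<Longrightarrow> E b a" and irr: "\<And>a. \<not> E a a" and finV: "finite V"
    and cf: "claw_free V E"
  shows "S \<subseteq> V \<Longrightarrow> red_hom_nonzero (K::'k::field itself) (ind_complex E S) j \<Longrightarrow> j \<le> 2 * im S E"
proof (induction "card S" arbitrary: S j rule: less_induct)
  case less
  have fS: "finite S" using less.prems(1) finV finite_subset by blast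
  show ?case
  proof (cases "j = 0")
    case True then show ?thesis by simp
  next
    case False
    then have j1: "j \<ge> 1" by simp
    show ?thesis
    proof (cases "\<exists>u v. u \<in> S \<and> v \<in> S \<and> E u v")
      case noE: False
      show ?thesis
      proof (cases "S = {}")
        case True
        have "\<not> red_hom_nonzero K (ind_complex E S) j"
        proof (rule no_faces, intro ballI impI)
          fix \<sigma> assume "\<sigma> \<in> ind_complex E S"
          then have "\<sigma> = {}" using True by (simp add: ic_empty)
          then show "card \<sigma> \<noteq> j" using j1 by simp
        qed
        then show ?thesis using less.prems(2) by blast
      next
        case ne: False
        have "\<not> red_hom_nonzero K (ind_complex E S) j"
          using edgeless[where E=E and S=S, OF sym irr fS ne] noE by blast
        then show ?thesis using less.prems(2) by blast
      qed
    next
      case True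
      then obtain u v where uS: "u \<in> S" and vS: "v \<in> S" and uv: "E u v" by blast
      interpret vx E S v using sym irr fS vS by unfold_locales auto
      define L0 where "L0 = S - insert v {x. E v x}"
      have SV: "S \<subseteq> V" using less.prems(1) .
      note oIH = less.hyps
      have inner: "\<And>L i. L \<subseteq> L0 \<Longrightarrow> (\<forall>a\<in>L. \<forall>b\<in>L. E u a \<and> E u b \<and> a \<noteq> b \<longrightarrow> E a b)
          \<Longrightarrow> red_hom_nonzero K (ind_complex E L) i \<Longrightarrow> i + 1 \<le> 2 * im S E"
      proof -
        fix L i
        show "L \<subseteq> L0 \<Longrightarrow> (\<forall>a\<in>L. \<forall>b\<in>L. E u a \<and> E u b \<and> a \<noteq> b \<longrightarrow> E a b)
          \<Longrightarrow> red_hom_nonzero K (ind_complex E L) i \<Longrightarrow> i + 1 \<le> 2 * im S E"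
        proof (induction "card (L \<inter> {x. E u x})" arbitrary: L i rule: less_induct)
          case (less L i)
          have LS: "L \<subseteq> S" using less.prems(1) unfolding L0_def by blast
          have fL: "finite L" using LS fS finite_subset by blast
          have vL: "v \<notin> L" using less.prems(1) unfolding L0_def by blast
          have uL: "u \<notin> L" using less.prems(1) sym[OF uv] unfolding L0_def by blast
          have im1: "1 \<le> im S E"
          proof -
            have "im {} E + 1 \<le> im S E"
              by (rule im_ext[where E=E, OF sym fS _ uS vS uv]) auto
            then show ?thesis by simp
          qed
          have cL: "card L < card S"
          proof (rule psubset_card_mono[OF fS])
            show "L \<subset> S" using LS vL vS by blast
          qed
          have LV: "L \<subseteq> V" using LS SV by blast
          show ?case
          proof (cases "i = 0")
            case True then show ?thesis using im1 by simp
          next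
            case False
            then have i1: "i \<ge> 1" by simp
            show ?thesis
            proof (cases "L \<inter> {x. E u x} = {}")
              case True
              have "i \<le> 2 * im L E" using oIH[OF cL LV less.prems(3)] .
              moreover have "im L E + 1 \<le> im S E"
              proof -
                have nu: "\<forall>y\<in>L. \<not> E u y \<and> \<not> E v y"
                proof (intro ballI conjI)
                  fix y assume "y \<in> L"
                  then show "\<not> E u y" using True by blast
                  show "\<not> E v y" using \<open>y \<in> L\<close> less.prems(1) unfolding L0_def by blast
                qed
                show ?thesis using im_ext[where E=E and L=L and S=S and u=u and v=v, OF sym fS LS uS vS uv uL vL nu] .
              qed
              ultimately show ?thesis by linarith
            next
              case False
              then obtain w where wL: "w \<in> L" and uw: "E u w" by blast
              interpret w: vx E L w using sym irr fL wL by unfold_locales auto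
              have "red_hom_nonzero K (ind_complex E (L - {w})) i \<or>
                    red_hom_nonzero K (ind_complex E (L - insert w {x. E w x})) (i - 1)"
                by (rule w.vertex[OF less.prems(3) i1])
              then show ?thesis
              proof
                assume h: "red_hom_nonzero K (ind_complex E (L - {w})) i"
                have lt: "card ((L - {w}) \<inter> {x. E u x}) < card (L \<inter> {x. E u x})"
                proof (rule psubset_card_mono)
                  show "finite (L \<inter> {x. E u x})" using fL by simp
                  show "(L - {w}) \<inter> {x. E u x} \<subset> L \<inter> {x. E u x}" using wL uw by blast
                qed
                show ?thesis
                  by (rule less.hyps[OF lt]) (use less.prems(1,2) h in blast)+
              next
                assume h: "red_hom_nonzero K (ind_complex E (L - insert w {x. E w x})) (i - 1)"
                define L' where "L' = L - insert w {x. E w x}"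
                have L'L: "L' \<subseteq> L" unfolding L'_def by blast
                have cL': "card L' < card S" using cL L'L fL card_mono le_less_trans by blast
                have "i - 1 \<le> 2 * im L' E"
                  using oIH[OF cL'] L'L LV h unfolding L'_def by blast
                moreover have "im L' E + 1 \<le> im S E"
                proof -
                  have L'S: "L' \<subseteq> S" using L'L LS by blast
                  have uL': "u \<notin> L'" using uL L'L by blast
                  have vL': "v \<notin> L'" using vL L'L by blast
                  have nu: "\<forall>y\<in>L'. \<not> E u y \<and> \<not> E v y"
                  proof (intro ballI conjI)
                    fix y assume y: "y \<in> L'"
                    then have yL: "y \<in> L" "y \<noteq> w" "\<not> E w y" unfolding L'_def by auto
                    show "\<not> E u y"
                    proof
                      assume "E u y"
                      then have "E y w" using less.prems(2) yL wL uw by blast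
                      then show False using sym yL(3) by blast
                    qed
                    show "\<not> E v y" using yL(1) less.prems(1) unfolding L0_def by blast
                  qed
                  show ?thesis using im_ext[where E=E and L=L' and S=S and u=u and v=v, OF sym fS L'S uS vS uv uL' vL' nu] .
                qed
                ultimately show ?thesis using i1 by linarith
              qed
            qed
          qed
        qed
      qed
      have "red_hom_nonzero K Dd j \<or> red_hom_nonzero K Lk (j - 1)"
        by (rule vertex[OF less.prems(2) j1])
      then show ?thesis
      proof
        assume h: "red_hom_nonzero K Dd j"
        have c: "card (S - {v}) < card S" by (rule card_Diff1_less[OF fS vS])
        have "j \<le> 2 * im (S - {v}) E" using less(1)[OF c] less.prems(1) h by blast
        moreover have "im (S - {v}) E \<le> im S E" by (rule im_mono[OF fS]) blast
        ultimately show ?thesis by linarith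
      next
        assume h: "red_hom_nonzero K Lk (j - 1)"
        have cl: "\<forall>a\<in>L0. \<forall>b\<in>L0. E u a \<and> E u b \<and> a \<noteq> b \<longrightarrow> E a b"
        proof (intro ballI impI)
          fix a b assume aL: "a \<in> L0" and bL: "b \<in> L0" and h2: "E u a \<and> E u b \<and> a \<noteq> b"
          show "E a b"
          proof (rule ccontr)
            assume nab: "\<not> E a b"
            have a: "a \<in> S" "a \<noteq> v" "\<not> E v a" using aL unfolding L0_def by auto
            have b: "b \<in> S" "b \<noteq> v" "\<not> E v b" using bL unfolding L0_def by auto
            have "\<not> E a v" using a(3) sym by blast
            moreover have "\<not> E b v" using b(3) sym by blast
            moreover have "u \<in> V" "a \<in> V" "b \<in> V" "v \<in> V" using uS a(1) b(1) vS SV by auto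
            ultimately show False using cf h2 uv nab a(2) b(2) unfolding claw_free_def by blast
          qed
        qed
        have "j - 1 + 1 \<le> 2 * im S E" using inner[OF _ cl] h unfolding L0_def by blast
        then show ?thesis using j1 by linarith
      qed
    qed
  qed
qed


theorem mainTheorem9:
  fixes V :: "'a::linorder set" and E :: "'a \<Rightarrow> 'a \<Rightarrow> bool"
  assumes "simple_graph V E"
    and "claw_free V E"
  shows "reg TYPE('k::field) V E \<le> 2 * im V E"
proof -
  have finV: "finite V" and sym: "\<And>a b. E a b \<Longrightarrow> E b a" and irr: "\<And>a. \<not> E a a"
    using assms(1) unfolding simple_graph_def by blast+
  define A where "A = {j. \<exists>S. S \<subseteq> V \<and> red_hom_nonzero TYPE('k) (ind_complex E S) j}"
  have bnd: "\<forall>j\<in>A. j \<le> 2 * im V E"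
  proof
    fix j assume "j \<in> A"
    then obtain S where S: "S \<subseteq> V" "red_hom_nonzero TYPE('k) (ind_complex E S) j"
      unfolding A_def by blast
    have "j \<le> 2 * im S E" by (rule main_ind[where E=E, OF sym irr finV assms(2) S])
    moreover have "im S E \<le> im V E" by (rule im_mono[OF finV S(1)])
    ultimately show "j \<le> 2 * im V E" by linarith
  qed
  have finA: "finite A"
  proof (rule finite_subset)
    show "A \<subseteq> {..2 * im V E}" using bnd by auto
  qed simp
  have "0 \<in> A" unfolding A_def using hom_empty0[of "TYPE('k)" E] by blast
  then have neA: "A \<noteq> {}" by blast
  have "reg TYPE('k) V E = Max A" unfolding reg_def A_def by simp
  also have "\<dots> \<le> 2 * im V E" using Max_le_iff[OF finA neA] bnd by blast
  finally show ?thesis .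
qed

end
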